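(* Let $(L,[\cdot,\cdot],\cdot,\alpha)$ be a multiplicative Hom-post-Lie algebra and let $k$ be a non-negative integer. Define $\{x,y\}:=[\alpha^k(x),y]$ and $x\ast y:=\alpha^k(x)\cdot y$ for $x,y\in L$. Then $(L,\{\cdot,\cdot\},\ast,\alpha)$ (i.e. $L$ with $\diamond=\{\cdot,\cdot\}$, $\bullet=\ast$ and structure map $\alpha$) is a module over the Hom-post-Lie algebra $(L,[\cdot,\cdot],\cdot,\alpha)$.
   Context: All vector spaces are over a field $\mathbb{K}$ of characteristic $\neq 2$. A Hom-Lie algebra is $(L,[\cdot,\cdot],\alpha)$ with $[\cdot,\cdot]$ bilinear and skew-symmetric, $\alpha$ linear, and $[\alpha(x),[y,z]]+[\alpha(y),[z,x]]+[\alpha(z),[x,y]]=0$. A Hom-post-Lie algebra $(L,[\cdot,\cdot],\cdot,\alpha)$ is a Hom-Lie algebra with a bilinear $\cdot$ such that for all $x,y,z$: $\alpha(z)\cdot[x,y]-[z\cdot x,\alpha(y)]-[\alpha(x),z\cdot y]=0$ and $\alpha(z)\cdot(y\cdot x)-\alpha(y)\cdot(z\cdot x)+(y\cdot z)\cdot\alpha(x)-(z\cdot y)\cdot\alpha(x)+[y,z]\cdot\alpha(x)=0$. It is multiplicative if $\alpha([x,y])=[\alpha(x),\alpha(y)]$ and $\alpha(x\cdot y)=\alpha(x)\cdot\alpha(y)$. A module over $L$ is a vector space $M$ with linear $\alpha_M:M\to M$ and bilinear $\diamond,\bullet:L\otimes M\to M$ such that for all $x,y\in L$, $m\in M$: (i)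 $\alpha_M(x\diamond m)=\alpha(x)\diamond\alpha_M(m)$, $\alpha_M(x\bullet m)=\alpha(x)\bullet\alpha_M(m)$; (ii) $[x,y]\diamond\alpha_M(m)=\alpha(x)\diamond(y\diamond m)-\alpha(y)\diamond(x\diamond m)$; (iii) $(x\cdot y)\diamond\alpha_M(m)=\alpha(x)\bullet(y\diamond m)-\alpha(y)\diamond(x\bullet m)$; (iv) $[x,y]\bullet\alpha_M(m)=\alpha(x)\bullet(y\bullet m)-\alpha(y)\bullet(x\bullet m)-(x\cdot y)\bullet\alpha_M(m)+(y\cdot x)\bullet\alpha_M(m)$. *)

theory Defs
  imports Main "HOL.Vector_Spaces"
begin

definition bilinear_map ::
  "('k::field \<Rightarrow> 'a::ab_group_add \<Rightarrow> 'a) \<Rightarrow> ('k \<Rightarrow> 'b::ab_group_add \<Rightarrow> 'b)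
   \<Rightarrow> ('k \<Rightarrow> 'c::ab_group_add \<Rightarrow> 'c) \<Rightarrow> ('a \<Rightarrow> 'b \<Rightarrow> 'c) \<Rightarrow> bool" where
  "bilinear_map s1 s2 s3 f \<longleftrightarrow>
     (\<forall>y. Vector_Spaces.linear s1 s3 (\<lambda>x. f x y)) \<and> (\<forall>x. Vector_Spaces.linear s2 s3 (f x))"

definition hom_lie_algebra ::
  "('k::field \<Rightarrow> 'a::ab_group_add \<Rightarrow> 'a) \<Rightarrow> ('a \<Rightarrow> 'a \<Rightarrow> 'a) \<Rightarrow> ('a \<Rightarrow> 'a) \<Rightarrow> bool" where
  "hom_lie_algebra s br al \<longleftrightarrow>
     vector_space s \<and> bilinear_map s s s br \<and> Vector_Spaces.linear s s al \<and>
     (\<forall>x y. br x y = - br y x) \<and>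
     (\<forall>x y z. br (al x) (br y z) + br (al y) (br z x) + br (al z) (br x y) = 0)"

definition hom_post_lie_algebra ::
  "('k::field \<Rightarrow> 'a::ab_group_add \<Rightarrow> 'a) \<Rightarrow> ('a \<Rightarrow> 'a \<Rightarrow> 'a) \<Rightarrow> ('a \<Rightarrow> 'a \<Rightarrow> 'a)
   \<Rightarrow> ('a \<Rightarrow> 'a) \<Rightarrow> bool" where
  "hom_post_lie_algebra s br dot al \<longleftrightarrow>
     hom_lie_algebra s br al \<and> bilinear_map s s s dot \<and>
     (\<forall>x y z. dot (al z) (br x y) - br (dot z x) (al y) - br (al x) (dot z y) = 0) \<and>
     (\<forall>x y z. dot (al z) (dot y x) - dot (al y) (dot z x) + dot (dot y z) (al x)
               - dot (dot z y) (al x) + dot (br y z) (al x) = 0)"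

definition multiplicative ::
  "('a \<Rightarrow> 'a \<Rightarrow> 'a) \<Rightarrow> ('a \<Rightarrow> 'a \<Rightarrow> 'a) \<Rightarrow> ('a \<Rightarrow> 'a) \<Rightarrow> bool" where
  "multiplicative br dot al \<longleftrightarrow>
     (\<forall>x y. al (br x y) = br (al x) (al y)) \<and> (\<forall>x y. al (dot x y) = dot (al x) (al y))"

definition hom_post_lie_module ::
  "('k::field \<Rightarrow> 'a::ab_group_add \<Rightarrow> 'a) \<Rightarrow> ('a \<Rightarrow> 'a \<Rightarrow> 'a) \<Rightarrow> ('a \<Rightarrow> 'a \<Rightarrow> 'a) \<Rightarrow> ('a \<Rightarrow> 'a)
   \<Rightarrow> ('k \<Rightarrow> 'm::ab_group_add \<Rightarrow> 'm) \<Rightarrow> ('m \<Rightarrow> 'm) \<Rightarrow> ('a \<Rightarrow> 'm \<Rightarrow> 'm) \<Rightarrow> ('a \<Rightarrow> 'm \<Rightarrow> 'm)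
   \<Rightarrow> bool" where
  "hom_post_lie_module s br dot al sM alM dia bul \<longleftrightarrow>
     vector_space sM \<and> Vector_Spaces.linear sM sM alM \<and>
     bilinear_map s sM sM dia \<and> bilinear_map s sM sM bul \<and>
     (\<forall>x m. alM (dia x m) = dia (al x) (alM m)) \<and>
     (\<forall>x m. alM (bul x m) = bul (al x) (alM m)) \<and>
     (\<forall>x y m. dia (br x y) (alM m) = dia (al x) (dia y m) - dia (al y) (dia x m)) \<and>
     (\<forall>x y m. dia (dot x y) (alM m) = bul (al x) (dia y m) - dia (al y) (bul x m)) \<and>
     (\<forall>x y m. bul (br x y) (alM m) = bul (al x) (bul y m) - bul (al y) (bul x m)
                 - bul (dot x y) (alM m) + bul (dot y x) (alM m))"

end

theory Submission
  imports Defs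
begin

lemma lin_pow:
  assumes "vector_space s" "Vector_Spaces.linear s s al"
  shows "Vector_Spaces.linear s s (al ^^ n)"
proof (induction n)
  case 0
  have "Vector_Spaces.linear s s id"
    using assms(1) unfolding linear_iff by simp
  then show ?case by (simp add: id_def)
next
  case (Suc n)
  have "Vector_Spaces.linear s s (al \<circ> (al ^^ n))"
    by (rule Vector_Spaces.linear_compose[OF Suc assms(2)])
  then show ?case by (metis funpow.simps(2))
qed

lemma pow_comm: "al ((al ^^ n) x) = (al ^^ n) (al x)"
  by (metis comp_apply funpow_Suc_right funpow_simps_right(2) funpow_swap1)

lemma pow_mult:
  assumes "\<forall>x y. al (f x y) = f (al x) (al y)"
  shows "(al ^^ n) (f x y) = f ((al ^^ n) x) ((al ^^ n) y)"
  using assms by (induction n) auto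

lemma lin_neg:
  assumes "Vector_Spaces.linear s1 s2 f" shows "f (- x) = - f x"
  using assms unfolding linear_iff_module_hom by (rule module_hom.neg)

lemma bil_comp:
  assumes "bilinear_map s s s f" "Vector_Spaces.linear s s g"
  shows "bilinear_map s s s (\<lambda>x y. f (g x) y)"
  using assms unfolding bilinear_map_def
  by (auto intro: Vector_Spaces.linear_compose[OF assms(2), unfolded comp_def])

theorem mainTheorem2:
  fixes s :: "'k::field \<Rightarrow> 'a::ab_group_add \<Rightarrow> 'a"
    and br dot :: "'a \<Rightarrow> 'a \<Rightarrow> 'a" and al :: "'a \<Rightarrow> 'a" and k :: nat
  assumes "(2::'k) \<noteq> 0"
    and "hom_post_lie_algebra s br dot al"
    and "multiplicative br dot al"
  shows "hom_post_lie_module s br dot al s al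
           (\<lambda>x y. br ((al ^^ k) x) y) (\<lambda>x y. dot ((al ^^ k) x) y)"
proof -
  let ?A = "al ^^ k"
  have vs: "vector_space s" and bbr: "bilinear_map s s s br" and lal: "Vector_Spaces.linear s s al"
    and sk: "\<forall>x y. br x y = - br y x"
    and jac: "\<forall>x y z. br (al x) (br y z) + br (al y) (br z x) + br (al z) (br x y) = 0"
    and bdot: "bilinear_map s s s dot"
    and ax1: "\<forall>x y z. dot (al z) (br x y) - br (dot z x) (al y) - br (al x) (dot z y) = 0"
    and ax2: "\<forall>x y z. dot (al z) (dot y x) - dot (al y) (dot z x) + dot (dot y z) (al x)
               - dot (dot z y) (al x) + dot (br y z) (al x) = 0"
    using assms(2) unfolding hom_post_lie_algebra_def hom_lie_algebra_def by blast+
  have mbr: "\<forall>x y. al (br x y) = br (al x) (al y)" and mdot: "\<forall>x y. al (dot x y) = dot (al x) (al y)"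
    using assms(3) unfolding multiplicative_def by blast+
  have lA: "Vector_Spaces.linear s s ?A" using lin_pow[OF vs lal] .
  have Abr: "\<And>x y. ?A (br x y) = br (?A x) (?A y)" using pow_mult[OF mbr] .
  have Adot: "\<And>x y. ?A (dot x y) = dot (?A x) (?A y)" using pow_mult[OF mdot] .
  have c: "\<And>x. ?A (al x) = al (?A x)" by (simp add: pow_comm)
  have i2: "br (?A (br x y)) (al m) = br (al (?A x)) (br (?A y) m) - br (al (?A y)) (br (?A x) m)" for x y m
  proof -
    have j: "br (al (?A x)) (br (?A y) m) + br (al (?A y)) (br m (?A x)) + br (al m) (br (?A x) (?A y)) = 0"
      using jac[rule_format, of "?A x" "?A y" m] .
    have e1: "br m (?A x) = - br (?A x) m" using sk[rule_format, of m "?A x"] .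
    have e2: "br (al m) (br (?A x) (?A y)) = - br (br (?A x) (?A y)) (al m)" using sk[rule_format, of "al m" "br (?A x) (?A y)"] .
    have e3: "br (al (?A y)) (- br (?A x) m) = - br (al (?A y)) (br (?A x) m)"
      by (rule lin_neg[OF bbr[unfolded bilinear_map_def, THEN conjunct2, rule_format]])
    have j2: "br (al (?A x)) (br (?A y) m) + - br (al (?A y)) (br (?A x) m) + - br (br (?A x) (?A y)) (al m) = 0"
      using j unfolding e1 e2 e3 .
    have "br (br (?A x) (?A y)) (al m) = br (al (?A x)) (br (?A y) m) - br (al (?A y)) (br (?A x) m)"
      using j2 unfolding add_eq_0_iff2 minus_minus diff_conv_add_uminus by (rule sym)
    then show ?thesis by (simp only: Abr)
  qed
  have i3: "br (?A (dot x y)) (al m) = dot (?A (al x)) (br (?A y) m) - br (?A (al y)) (dot (?A x) m)" for x y m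
    proof -
    have "dot (al (?A x)) (br (?A y) m) - br (dot (?A x) (?A y)) (al m) - br (al (?A y)) (dot (?A x) m) = 0"
      using ax1[rule_format, of "?A x" "?A y" m] .
    then have "br (dot (?A x) (?A y)) (al m) = dot (al (?A x)) (br (?A y) m) - br (al (?A y)) (dot (?A x) m)"
      by (simp only: diff_right_commute[of _ "br (dot (?A x) (?A y)) (al m)"] eq_iff_diff_eq_0[symmetric])
    then show ?thesis by (simp only: Adot c)
  qed
  have i4: "dot (?A (br x y)) (al m) = dot (?A (al x)) (dot (?A y) m) - dot (?A (al y)) (dot (?A x) m)
                 - dot (?A (dot x y)) (al m) + dot (?A (dot y x)) (al m)" for x y m
  proof -
    have e: "dot (al (?A x)) (dot (?A y) m) - dot (al (?A y)) (dot (?A x) m) + dot (dot (?A y) (?A x)) (al m)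
               - dot (dot (?A x) (?A y)) (al m) + dot (br (?A y) (?A x)) (al m) = 0"
      using ax2[rule_format, of "?A x" "?A y" m] .
    have "br (?A y) (?A x) = - br (?A x) (?A y)" using sk[rule_format, of "?A y" "?A x"] .
    then have e4: "dot (br (?A y) (?A x)) (al m) = - dot (br (?A x) (?A y)) (al m)"
      using lin_neg[OF bdot[unfolded bilinear_map_def, THEN conjunct1, rule_format, of "al m"], of "br (?A x) (?A y)"] by simp
    have e5: "dot (al (?A x)) (dot (?A y) m) - dot (al (?A y)) (dot (?A x) m) + dot (dot (?A y) (?A x)) (al m)
               - dot (dot (?A x) (?A y)) (al m) + - dot (br (?A x) (?A y)) (al m) = 0"
      using e unfolding e4 .
    have "dot (br (?A x) (?A y)) (al m) = dot (al (?A x)) (dot (?A y) m) - dot (al (?A y)) (dot (?A x) m) + dot (dot (?A y) (?A x)) (al m)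
               - dot (dot (?A x) (?A y)) (al m)"
      using e5 unfolding add_eq_0_iff2 minus_minus by (rule sym)
    then show ?thesis by (simp only: Abr Adot c diff_add_eq)
  qed
  show ?thesis
    unfolding hom_post_lie_module_def
    using vs lal bil_comp[OF bbr lA] bil_comp[OF bdot lA] i2 i3 i4
    by (simp add: mbr mdot c)
qed

end
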